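(* Let $R$ be an associative ring with identity and $a,b,c,d\in R$ such that both $a^{\|(b,c)}$ and $d^{\|(b,c)}$ exist. Then the following are equivalent: (i) $a^{\|(b,c)}a=d^{\|(b,c)}d$; (ii) $d^{\|(b,c)}da^{\|(b,c)}a=a^{\|(b,c)}ad^{\|(b,c)}d$; (iii) $a^{\|(b,c)}dd^{\|(b,c)}a=d^{\|(b,c)}aa^{\|(b,c)}d$; (iv) $a^{\|(b,c)}d$ is group invertible and $(a^{\|(b,c)}d)^{\#}=d^{\|(b,c)}a$; (v) $d^{\|(b,c)}a$ is group invertible and $(d^{\|(b,c)}a)^{\#}=a^{\|(b,c)}d$.
   Context: For $a,b,c\in R$, $a$ is $(b,c)$-invertible if there exists $y\in R$ with $y\in (bRy)\cap(yRc)$, $yab=b$ and $cay=c$; such $y$ is unique and denoted $a^{\|(b,c)}$. An element $x\in R$ is group invertible if there is $z\in R$ with $xzx=x$, $zxz=z$, $xz=zx$; such $z$ is unique and denoted $x^{\#}$. *)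

theory Defs
  imports Main
begin

definition is_bc_inverse :: "'a::ring_1 \<Rightarrow> 'a \<Rightarrow> 'a \<Rightarrow> 'a \<Rightarrow> bool" where
  "is_bc_inverse a b c y \<longleftrightarrow>
     (\<exists>r. y = b * r * y) \<and> (\<exists>s. y = y * s * c) \<and> y * a * b = b \<and> c * a * y = c"

definition bc_invertible :: "'a::ring_1 \<Rightarrow> 'a \<Rightarrow> 'a \<Rightarrow> bool" where
  "bc_invertible a b c \<longleftrightarrow> (\<exists>y. is_bc_inverse a b c y)"

definition bc_inv :: "'a::ring_1 \<Rightarrow> 'a \<Rightarrow> 'a \<Rightarrow> 'a" where
  "bc_inv a b c = (THE y. is_bc_inverse a b c y)"

definition is_group_inverse :: "'a::ring_1 \<Rightarrow> 'a \<Rightarrow> bool" where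
  "is_group_inverse x z \<longleftrightarrow> x * z * x = x \<and> z * x * z = z \<and> x * z = z * x"

definition group_invertible :: "'a::ring_1 \<Rightarrow> bool" where
  "group_invertible x \<longleftrightarrow> (\<exists>z. is_group_inverse x z)"

definition group_inv :: "'a::ring_1 \<Rightarrow> 'a" where
  "group_inv x = (THE z. is_group_inverse x z)"

end

theory Submission
  imports Defs
begin

lemma L1:
  fixes x y b r :: "'a::ring_1"
  assumes "y = b*r*y" "x*b = b" shows "x*y = y"
proof -
  have "x*y = x*(b*r*y)" using assms(1) by (rule arg_cong)
  also have "\<dots> = (x*b)*r*y" by (simp only: mult.assoc)
  also have "\<dots> = y" using assms by simp
  finally show ?thesis .
qed

lemma L2:
  fixes x y s c :: "'a::ring_1"
  assumes "y = y*s*c" "c*x = c" shows "y*x = y"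
proof -
  have "y*x = (y*s*c)*x" using assms(1) by (rule arg_cong)
  also have "\<dots> = y*s*(c*x)" by (simp only: mult.assoc)
  also have "\<dots> = y" using assms by simp
  finally show ?thesis .
qed

lemma bc_unique:
  fixes a b c :: "'a::ring_1"
  assumes "is_bc_inverse a b c y" "is_bc_inverse a b c y'"
  shows "y = y'"
proof -
  obtain r s where y: "y = b*r*y" "y = y*s*c" "y*a*b = b" "c*a*y = c"
    using assms(1) unfolding is_bc_inverse_def by blast
  obtain r' s' where y': "y' = b*r'*y'" "y' = y'*s'*c" "y'*a*b = b" "c*a*y' = c"
    using assms(2) unfolding is_bc_inverse_def by blast
  have "y*a*y' = y'" by (rule L1[OF y'(1) y(3)])
  moreover have "y*(a*y') = y" by (rule L2[OF y(2)]) (simp add: y'(4) mult.assoc[symmetric])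
  hence "y*a*y' = y" by (simp add: mult.assoc)
  ultimately show ?thesis by simp
qed

lemma bc_inv_prop:
  fixes a b c :: "'a::ring_1"
  assumes "bc_invertible a b c"
  shows "is_bc_inverse a b c (bc_inv a b c)"
proof -
  obtain y where "is_bc_inverse a b c y" using assms unfolding bc_invertible_def by blast
  then have "\<exists>!y. is_bc_inverse a b c y" using bc_unique by blast
  then show ?thesis unfolding bc_inv_def by (rule theI')
qed

lemma gi_unique:
  fixes x :: "'a::ring_1"
  assumes "is_group_inverse x z1" "is_group_inverse x z2"
  shows "z1 = z2"
proof -
  have 1: "x*z1*x = x" "z1*x*z1 = z1" "x*z1 = z1*x" using assms(1) unfolding is_group_inverse_def by auto
  have 2: "x*z2*x = x" "z2*x*z2 = z2" "x*z2 = z2*x" using assms(2) unfolding is_group_inverse_def by auto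
  have f: "(x*z1)*(x*z2) = x*z2" by (simp add: mult.assoc[symmetric] 1(1))
  have "z1*x*z2*x = z1*(x*z2*x)" by (simp only: mult.assoc)
  hence ee: "(z1*x)*(z2*x) = z1*x" using 2(1) by (simp add: mult.assoc)
  have e: "x*z1 = x*z2" using f ee 1(3) 2(3) by simp
  have "z1 = z1*(x*z1)" using 1(2) 1(3) by (simp add: mult.assoc)
  also have "\<dots> = z1*x*z2" using e by (simp add: mult.assoc)
  also have "\<dots> = (x*z1)*z2" using 1(3) by simp
  also have "\<dots> = z2*x*z2" using e 2(3) by simp
  also have "\<dots> = z2" using 2(2) .
  finally show ?thesis .
qed

lemma gi_iff:
  fixes x w :: "'a::ring_1"
  shows "(group_invertible x \<and> group_inv x = w) \<longleftrightarrow> is_group_inverse x w"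
proof
  assume h: "group_invertible x \<and> group_inv x = w"
  then obtain z where "is_group_inverse x z" unfolding group_invertible_def by blast
  then have "\<exists>!z. is_group_inverse x z" using gi_unique by blast
  then have "is_group_inverse x (group_inv x)" unfolding group_inv_def by (rule theI')
  then show "is_group_inverse x w" using h by simp
next
  assume h: "is_group_inverse x w"
  then have "group_inv x = w" unfolding group_inv_def using gi_unique by (metis the_equality)
  then show "group_invertible x \<and> group_inv x = w" using h unfolding group_invertible_def by blast
qed

theorem theorem4p3:
  fixes a b c d :: "'a::ring_1"
  assumes "bc_invertible a b c" and "bc_invertible d b c"
  defines "ai \<equiv> bc_inv a b c" and "di \<equiv> bc_inv d b c"
  shows "(ai * a = di * d \<longleftrightarrow> di * d * ai * a = ai * a * di * d)
       \<and> (ai * a = di * d \<longleftrightarrow> ai * d * di * a = di * a * ai * d)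
       \<and> (ai * a = di * d \<longleftrightarrow> group_invertible (ai * d) \<and> group_inv (ai * d) = di * a)
       \<and> (ai * a = di * d \<longleftrightarrow> group_invertible (di * a) \<and> group_inv (di * a) = ai * d)"
proof -
  obtain r s where y: "ai = b*r*ai" "ai = ai*s*c" "ai*a*b = b" "c*a*ai = c"
    using bc_inv_prop[OF assms(1)] unfolding is_bc_inverse_def ai_def by blast
  obtain r' s' where z: "di = b*r'*di" "di = di*s'*c" "di*d*b = b" "c*d*di = c"
    using bc_inv_prop[OF assms(2)] unfolding is_bc_inverse_def di_def by blast
  have yay: "ai*a*ai = ai" by (rule L1[OF y(1) y(3)])
  have zdz: "di*d*di = di" by (rule L1[OF z(1) z(3)])
  have zdy: "di*d*ai = ai" by (rule L1[OF y(1) z(3)])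
  have yaz: "ai*a*di = di" by (rule L1[OF z(1) y(3)])
  have "di*(a*ai) = di" by (rule L2[OF z(2)]) (simp add: y(4) mult.assoc[symmetric])
  hence zay: "di*a*ai = di" by (simp add: mult.assoc)
  have "ai*(d*di) = ai" by (rule L2[OF y(2)]) (simp add: z(4) mult.assoc[symmetric])
  hence ydz: "ai*d*di = ai" by (simp add: mult.assoc)
  have ii: "di * d * ai * a = ai * a" using zdy by simp
  have ii2: "ai * a * di * d = di * d" using yaz by simp
  have iii: "ai * d * di * a = ai * a" using ydz by simp
  have iii2: "di * a * ai * d = di * d" using zay by simp
  have g1: "is_group_inverse (ai*d) (di*a) \<longleftrightarrow> ai * a = di * d"
  proof -
    have "(ai*d)*(di*a)*(ai*d) = ai*d" by (simp add: mult.assoc[symmetric] ydz yay)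
    moreover have "(di*a)*(ai*d)*(di*a) = di*a" by (simp add: mult.assoc[symmetric] zay zdz)
    moreover have "(ai*d)*(di*a) = ai*a" by (simp add: mult.assoc[symmetric] ydz)
    moreover have "(di*a)*(ai*d) = di*d" by (simp add: mult.assoc[symmetric] zay)
    ultimately show ?thesis unfolding is_group_inverse_def by auto
  qed
  have g2: "is_group_inverse (di*a) (ai*d) \<longleftrightarrow> ai * a = di * d"
  proof -
    have "(ai*d)*(di*a)*(ai*d) = ai*d" by (simp add: mult.assoc[symmetric] ydz yay)
    moreover have "(di*a)*(ai*d)*(di*a) = di*a" by (simp add: mult.assoc[symmetric] zay zdz)
    moreover have "(ai*d)*(di*a) = ai*a" by (simp add: mult.assoc[symmetric] ydz)
    moreover have "(di*a)*(ai*d) = di*d" by (simp add: mult.assoc[symmetric] zay)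
    ultimately show ?thesis unfolding is_group_inverse_def by auto
  qed
  show ?thesis using ii ii2 iii iii2 g1 g2 gi_iff by auto
qed

end
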